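(* Let $Q$ be a smooth real function on an open interval, and let $C_1\neq 0$, $C_2$ and $\alpha_0$ be real constants. Let $G$ be an antiderivative $$G(\rho)=\int\frac{Q'(\rho)}{C_1(C_1\rho+C_2)}\,d\rho$$ on an open interval $J$ on which $C_1\rho+C_2\neq 0$. Assume $G$ is invertible on $J$, meaning that it is a diffeomorphism of $J$ onto its image. Then the function $$\rho(t,x)=G^{-1}\!\left(\frac{x+\alpha_0}{C_1}+t\right),$$ defined for all $(t,x)$ with $\frac{x+\alpha_0}{C_1}+t\in G(J)$, is a solution of the non-stationary filtration equation $\rho_t=(Q(\rho))_{xx}$.
   Context: In the paper, $Q(\rho)=\int\frac{k(\rho)\rho p'(\rho)}{\mu(\rho)}d\rho$, where $p$ is the pressure, $k$ the permeability and $\mu$ the viscosity, all given as functions of the density $\rho$ along a thermodynamic process. *)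

theory Defs
  imports "HOL-Analysis.Analysis"
begin

definition smooth_on :: "real set \<Rightarrow> (real \<Rightarrow> real) \<Rightarrow> bool" where
  "smooth_on S f \<longleftrightarrow> (\<forall>n. \<forall>x\<in>S. ((deriv ^^ n) f) differentiable (at x))"

definition solves_filtration ::
  "(real \<Rightarrow> real) \<Rightarrow> (real \<Rightarrow> real \<Rightarrow> real) \<Rightarrow> (real \<times> real) set \<Rightarrow> bool" where
  "solves_filtration Q rho \<Omega> \<longleftrightarrow>
     (\<forall>(t, x)\<in>\<Omega>. \<exists>Qx D.
        (\<forall>\<^sub>F y in nhds x. ((\<lambda>z. Q (rho t z)) has_real_derivative Qx y) (at y)) \<and>
        (Qx has_real_derivative D) (at x) \<and>
        ((\<lambda>s. rho s x) has_real_derivative D) (at t))"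

end

theory Submission
  imports Defs
begin

theorem mainTheorem2:
  fixes Q G :: "real \<Rightarrow> real" and I J :: "real set" and C1 C2 \<alpha>0 :: real
  assumes I: "open I" "is_interval I" "I \<noteq> {}"
      and Qsmooth: "smooth_on I Q"
      and J: "open J" "is_interval J" "J \<noteq> {}" "J \<subseteq> I"
      and C1: "C1 \<noteq> 0"
      and nz: "\<forall>r\<in>J. C1 * r + C2 \<noteq> 0"
      and G: "\<forall>r\<in>J. (G has_real_derivative deriv Q r / (C1 * (C1 * r + C2))) (at r)"
      and Ginj: "inj_on G J"
      and Ginv: "smooth_on (G ` J) (inv_into J G)"
  shows "solves_filtration Q (\<lambda>t x. inv_into J G ((x + \<alpha>0) / C1 + t))
           {(t, x). (x + \<alpha>0) / C1 + t \<in> G ` J}"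
proof -
  define H where "H = inv_into J G"
  have contG: "continuous_on J G"
    using G by (meson DERIV_isCont continuous_at_imp_continuous_on)
  have openGJ: "open (G ` J)"
    by (rule invariance_of_domain[OF contG J(1) Ginj])
  have Hdiff: "H differentiable (at v)" if "v \<in> G ` J" for v
    using Ginv that unfolding smooth_on_def H_def by (metis funpow_0)
  have HD: "(H has_real_derivative deriv H v) (at v)" if "v \<in> G ` J" for v
    using Hdiff[OF that] DERIV_deriv_iff_real_differentiable by blast
  have Qd: "(Q has_real_derivative deriv Q r) (at r)" if "r \<in> J" for r
  proof -
    have "Q differentiable (at r)"
      using Qsmooth that J(4) unfolding smooth_on_def by (metis funpow_0 subsetD)
    then show ?thesis using DERIV_deriv_iff_real_differentiable by blast
  qed
  have key: "deriv Q (H v) * deriv H v / C1 = C1 * H v + C2" if v: "v \<in> G ` J" for v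
  proof -
    have r: "H v \<in> J" using v unfolding H_def by (auto simp: inv_into_into)
    have Gr: "G (H v) = v" using v unfolding H_def by (simp add: f_inv_into_f)
    have c: "((H \<circ> G) has_real_derivative deriv H v * (deriv Q (H v) / (C1 * (C1 * H v + C2)))) (at (H v))"
      by (rule DERIV_chain) (use HD[OF v] G r Gr in auto)
    have "((\<lambda>x. x) has_real_derivative deriv H v * (deriv Q (H v) / (C1 * (C1 * H v + C2)))) (at (H v))"
      by (rule has_field_derivative_transform_within_open[OF c J(1) r])
         (simp add: H_def Ginj)
    moreover have "((\<lambda>x. x) has_real_derivative 1) (at (H v))" by (rule DERIV_ident)
    ultimately have "deriv H v * (deriv Q (H v) / (C1 * (C1 * H v + C2))) = 1"
      using DERIV_unique by blast
    then show ?thesis using C1 nz r by (auto simp: field_simps)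
  qed
  have main: "\<exists>Qx D. (\<forall>\<^sub>F y in nhds x. ((\<lambda>z. Q (H ((z + \<alpha>0) / C1 + t))) has_real_derivative Qx y) (at y)) \<and>
            (Qx has_real_derivative D) (at x) \<and> ((\<lambda>s. H ((x + \<alpha>0) / C1 + s)) has_real_derivative D) (at t)"
    if u: "(x + \<alpha>0) / C1 + t \<in> G ` J" for t x
  proof -
    let ?u = "\<lambda>y. (y + \<alpha>0) / C1 + t"
    have ud: "(?u has_real_derivative 1 / C1) (at y)" for y
      using DERIV_add[OF DERIV_cdivide[OF DERIV_add[OF DERIV_ident DERIV_const[of \<alpha>0]], of C1] DERIV_const[of t]]
      by simp
    have cu: "continuous (at x) ?u" using C1 by (intro continuous_intros) auto
    have ev: "\<forall>\<^sub>F y in nhds x. ?u y \<in> G ` J"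
    proof -
      have "(?u \<longlongrightarrow> ?u x) (nhds x)"
        using cu unfolding continuous_at by (subst tendsto_at_iff_tendsto_nhds[symmetric])
      then show ?thesis using topological_tendstoD openGJ u by blast
    qed
    show "\<exists>Qx D. (\<forall>\<^sub>F y in nhds x. ((\<lambda>z. Q (H (?u z))) has_real_derivative Qx y) (at y)) \<and>
            (Qx has_real_derivative D) (at x) \<and> ((\<lambda>s. H ((x + \<alpha>0) / C1 + s)) has_real_derivative D) (at t)"
    proof (intro exI conjI)
      show "\<forall>\<^sub>F y in nhds x. ((\<lambda>z. Q (H (?u z))) has_real_derivative C1 * H (?u y) + C2) (at y)"
        using ev
      proof eventually_elim
        case (elim y)
        have r: "H (?u y) \<in> J" using elim unfolding H_def by (auto simp: inv_into_into)
        have "((\<lambda>z. Q (H (?u z))) has_real_derivative deriv Q (H (?u y)) * (deriv H (?u y) * (1 / C1))) (at y)"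
          using DERIV_chain2[OF Qd[OF r] DERIV_chain2[OF HD[OF elim] ud]] by simp
        then show ?case using key[OF elim] by simp
      qed
      have "((\<lambda>y. C1 * H (?u y) + C2) has_real_derivative C1 * (deriv H (?u x) * (1 / C1))) (at x)"
        using DERIV_add[OF DERIV_cmult[OF DERIV_chain2[OF HD[OF u] ud], of C1] DERIV_const[of C2]] by simp
      then show "((\<lambda>y. C1 * H (?u y) + C2) has_real_derivative deriv H (?u x)) (at x)"
        using C1 by simp
      have ts: "((\<lambda>s. (x + \<alpha>0) / C1 + s) has_real_derivative 1) (at t)"
        by (auto intro!: derivative_eq_intros)
      then show "((\<lambda>s. H ((x + \<alpha>0) / C1 + s)) has_real_derivative deriv H (?u x)) (at t)"
        using DERIV_chain2[OF HD[OF u] ts] by simp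
    qed
  qed
  show ?thesis
    unfolding solves_filtration_def using main by (auto simp: H_def)
qed

end
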